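(* In a dynamic network congestion game, a strategy profile is a subgame-perfect equilibrium if, and only if, it is a very-weak subgame-perfect equilibrium.
   Context: An arena is $\mathcal A=(V,E,\mathsf{src},\mathsf{tgt})$ with $V$ finite, $E$ a partial function from $V\times V$ to non-decreasing piecewise-affine functions $\mathbb N\to\mathbb N$ (edge $e$ has cost function $\ell_e$); $\mathsf{tgt}$ has only a self-loop of constant cost $0$ and is reachable from every state. In the dynamic NCG $(\mathcal A,n)$, players $[n]$ start in $\mathsf{src}$; configurations are maps $[n]\to V$; in each step each player simultaneously picks an edge leaving their current state, moves along it and pays $\ell_e(u)$, $u$ being the number of players using edge $e$ in that step. A history is a finite sequence of such steps; a strategy maps histories to edges leaving the player's current state. For a profile $\sigma$ and a history $h$, the residual profile $\sigma^h$ (played from the last configuration of $h$) is given by $\sigma^h_i(h')=\sigma_i(h\cdot h')$; $\mathrm{cost}_i$ of a profile is player $i$'s total payment along its outcome until reaching $\mathsf{tgt}$ ($+\infty$ if never). A Nash equilibrium is a profile in which no player can lower their cost by a unilateral change of strategy; a subgame-perfect equilibrium is a profile $\sigma$ such that $\sigma^h$ is a Nash equilibrium for every history $h$. A strategy $\sigma'_i$ is first-shot deviating from $\sigma_i$ if they coincide on all histories except the empty (trivial) history. A profile $\sigma$ is a very-weak Nash equilibrium if for every player $i$ and every $\sigma'_i$ first-shot deviating from $\sigma_i$, $\mathrm{cost}_i(\langle\sigma_{-i},\sigma'_i\rangle)\ge\mathrm{cost}_i(\sigma)$. A very-weak subgame-perfect equilibrium is a profile $\sigma$ such that $\sigma^h$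 is a very-weak Nash equilibrium for every history $h$. *)

theory Defs
  imports Main "HOL-Library.Extended_Nat"
begin

definition piecewise_affine :: "(nat \<Rightarrow> nat) \<Rightarrow> bool" where
  "piecewise_affine f \<longleftrightarrow>
     (\<exists>ts :: nat list. \<exists>a b :: nat \<Rightarrow> real. sorted ts \<and> distinct ts \<and>
        (\<forall>x. real (f x) = a (card {t \<in> set ts. t \<le> x}) * real x + b (card {t \<in> set ts. t \<le> x})))"

record 'v arena =
  verts :: "'v set"
  edges :: "'v \<Rightarrow> 'v \<Rightarrow> (nat \<Rightarrow> nat) option"
  src :: 'v
  tgt :: 'v

definition is_arena :: "'v arena \<Rightarrow> bool" where
  "is_arena A \<longleftrightarrow>
     finite (verts A) \<and> src A \<in> verts A \<and> tgt A \<in> verts A \<and>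
     (\<forall>u v. edges A u v \<noteq> None \<longrightarrow> u \<in> verts A \<and> v \<in> verts A) \<and>
     (\<forall>u v l. edges A u v = Some l \<longrightarrow> mono l \<and> piecewise_affine l) \<and>
     edges A (tgt A) (tgt A) = Some (\<lambda>_. 0) \<and>
     (\<forall>v. v \<noteq> tgt A \<longrightarrow> edges A (tgt A) v = None) \<and>
     (\<forall>v \<in> verts A. (v, tgt A) \<in> {(u, w). edges A u w \<noteq> None}\<^sup>*)"

text \<open>Players are 0..<n. A configuration is a list of length n (position of each player).
  Since E is a partial function on V x V, a step is determined by the configuration
  reached; a history is the list of configurations reached after each step (starting
  from a given configuration c). A strategy maps histories to the next vertex, i.e.
  to the edge (current vertex, next vertex).\<close>

type_synonym 'v config = "'v list"
type_synonym 'v history = "'v config list"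
type_synonym 'v strategy = "'v history \<Rightarrow> 'v"
type_synonym 'v profile = "nat \<Rightarrow> 'v strategy"

definition init_config :: "'v arena \<Rightarrow> nat \<Rightarrow> 'v config" where
  "init_config A n = replicate n (src A)"

definition valid_history :: "'v arena \<Rightarrow> nat \<Rightarrow> 'v config \<Rightarrow> 'v history \<Rightarrow> bool" where
  "valid_history A n c h \<longleftrightarrow>
     (\<forall>k < length h. length (h ! k) = n \<and>
        (\<forall>j < n. edges A (((c # h) ! k) ! j) ((h ! k) ! j) \<noteq> None))"

definition is_strategy :: "'v arena \<Rightarrow> nat \<Rightarrow> 'v config \<Rightarrow> nat \<Rightarrow> 'v strategy \<Rightarrow> bool" where
  "is_strategy A n c i s \<longleftrightarrow>
     (\<forall>h. valid_history A n c h \<longrightarrow> edges A (last (c # h) ! i) (s h) \<noteq> None)"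

definition is_profile :: "'v arena \<Rightarrow> nat \<Rightarrow> 'v config \<Rightarrow> 'v profile \<Rightarrow> bool" where
  "is_profile A n c \<sigma> \<longleftrightarrow> (\<forall>i < n. is_strategy A n c i (\<sigma> i))"

primrec play_hist :: "nat \<Rightarrow> 'v profile \<Rightarrow> nat \<Rightarrow> 'v history" where
  "play_hist n \<sigma> 0 = []"
| "play_hist n \<sigma> (Suc k) = play_hist n \<sigma> k @ [map (\<lambda>i. \<sigma> i (play_hist n \<sigma> k)) [0..<n]]"

definition conf :: "nat \<Rightarrow> 'v profile \<Rightarrow> 'v config \<Rightarrow> nat \<Rightarrow> 'v config" where
  "conf n \<sigma> c k = last (c # play_hist n \<sigma> k)"

definition pay :: "'v arena \<Rightarrow> nat \<Rightarrow> 'v config \<Rightarrow> 'v profile \<Rightarrow> nat \<Rightarrow> nat \<Rightarrow> nat" where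
  "pay A n c \<sigma> i k =
     (let p = conf n \<sigma> c k; q = conf n \<sigma> c (Suc k) in
      case edges A (p ! i) (q ! i) of
        Some l \<Rightarrow> l (card {j. j < n \<and> p ! j = p ! i \<and> q ! j = q ! i})
      | None \<Rightarrow> 0)"

definition cost :: "'v arena \<Rightarrow> nat \<Rightarrow> 'v config \<Rightarrow> 'v profile \<Rightarrow> nat \<Rightarrow> enat" where
  "cost A n c \<sigma> i =
     (if \<exists>k. conf n \<sigma> c k ! i = tgt A
      then enat (\<Sum>k < (LEAST k. conf n \<sigma> c k ! i = tgt A). pay A n c \<sigma> i k)
      else \<infinity>)"

definition residual :: "'v profile \<Rightarrow> 'v history \<Rightarrow> 'v profile" where
  "residual \<sigma> h = (\<lambda>i h'. \<sigma> i (h @ h'))"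

definition is_NE :: "'v arena \<Rightarrow> nat \<Rightarrow> 'v config \<Rightarrow> 'v profile \<Rightarrow> bool" where
  "is_NE A n c \<sigma> \<longleftrightarrow>
     (\<forall>i < n. \<forall>s. is_strategy A n c i s \<longrightarrow> cost A n c \<sigma> i \<le> cost A n c (\<sigma>(i := s)) i)"

definition first_shot_deviating :: "'v strategy \<Rightarrow> 'v strategy \<Rightarrow> bool" where
  "first_shot_deviating s' s \<longleftrightarrow> (\<forall>h. h \<noteq> [] \<longrightarrow> s' h = s h)"

definition is_VWNE :: "'v arena \<Rightarrow> nat \<Rightarrow> 'v config \<Rightarrow> 'v profile \<Rightarrow> bool" where
  "is_VWNE A n c \<sigma> \<longleftrightarrow>
     (\<forall>i < n. \<forall>s. is_strategy A n c i s \<and> first_shot_deviating s (\<sigma> i) \<longrightarrow>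
        cost A n c \<sigma> i \<le> cost A n c (\<sigma>(i := s)) i)"

definition is_SPE :: "'v arena \<Rightarrow> nat \<Rightarrow> 'v profile \<Rightarrow> bool" where
  "is_SPE A n \<sigma> \<longleftrightarrow>
     (\<forall>h. valid_history A n (init_config A n) h \<longrightarrow>
        is_NE A n (last (init_config A n # h)) (residual \<sigma> h))"

definition is_VWSPE :: "'v arena \<Rightarrow> nat \<Rightarrow> 'v profile \<Rightarrow> bool" where
  "is_VWSPE A n \<sigma> \<longleftrightarrow>
     (\<forall>h. valid_history A n (init_config A n) h \<longrightarrow>
        is_VWNE A n (last (init_config A n # h)) (residual \<sigma> h))"

end

theory Submission
  imports Defs
begin

lemma length_play_hist[simp]: "length (play_hist n P k) = k"
  by (induction k) auto

lemma play_hist_agree: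
  assumes "\<And>j h. length h < L \<Longrightarrow> P j h = Q j h"
  shows "k \<le> L \<Longrightarrow> play_hist n P k = play_hist n Q k"
proof (induction k)
  case 0 then show ?case by simp
next
  case (Suc k)
  then have "play_hist n P k = play_hist n Q k" by simp
  moreover have "\<And>j. P j (play_hist n P k) = Q j (play_hist n P k)"
    using assms Suc.prems by simp
  ultimately show ?case by simp
qed

lemma conf_agree:
  assumes "\<And>j h. length h < L \<Longrightarrow> P j h = Q j h" "k \<le> L"
  shows "conf n P c k = conf n Q c k"
  using play_hist_agree[OF assms(1) assms(2)] by (simp add: conf_def)

lemma pay_agree:
  assumes "\<And>j h. length h < L \<Longrightarrow> P j h = Q j h" "k < L"
  shows "pay A n c P i k = pay A n c Q i k"
  using conf_agree[OF assms(1), where k=k and n=n and c=c] conf_agree[OF assms(1), where k="Suc k" and n=n and c=c] assms(2)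
  by (simp add: pay_def)

lemma cost_agree:
  assumes ex: "\<exists>k. conf n P c k ! i = tgt A"
    and L: "L = (LEAST k. conf n P c k ! i = tgt A)"
    and ag: "\<And>j h. length h < L \<Longrightarrow> P j h = Q j h"
  shows "cost A n c P i = cost A n c Q i"
proof -
  have PL: "conf n P c L ! i = tgt A" unfolding L by (rule LeastI_ex[OF ex])
  have PB: "\<And>k. k < L \<Longrightarrow> conf n P c k ! i \<noteq> tgt A" using L not_less_Least by blast
  have QL: "conf n Q c L ! i = tgt A" using PL conf_agree[OF ag, where k=L and n=n and c=c] by simp
  have QB: "\<And>k. k < L \<Longrightarrow> conf n Q c k ! i \<noteq> tgt A"
  proof -
    fix k assume k: "k < L"
    then have "conf n Q c k = conf n P c k" using conf_agree[OF ag, where k=k and n=n and c=c] by simp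
    then show "conf n Q c k ! i \<noteq> tgt A" using PB[OF k] by simp
  qed
  have LQ: "(LEAST k. conf n Q c k ! i = tgt A) = L"
  proof (rule Least_equality)
    show "conf n Q c L ! i = tgt A" by (rule QL)
  next
    fix y assume "conf n Q c y ! i = tgt A"
    then show "L \<le> y" using QB[of y] by (meson not_le)
  qed
  have "(\<Sum>k<L. pay A n c P i k) = (\<Sum>k<L. pay A n c Q i k)"
    using pay_agree[OF ag] by (intro sum.cong) auto
  then show ?thesis using ex QL L LQ unfolding cost_def by auto
qed

lemma play_hist_shift:
  "play_hist n P (Suc k) = map (\<lambda>j. P j []) [0..<n] # play_hist n (residual P [map (\<lambda>j. P j []) [0..<n]]) k"
  by (induction k) (auto simp: residual_def)

lemma conf_shift:
  "conf n P c (Suc k) = conf n (residual P [map (\<lambda>j. P j []) [0..<n]]) (map (\<lambda>j. P j []) [0..<n]) k"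
  unfolding conf_def by (simp only: play_hist_shift) simp

lemma conf_one: "conf n P c (Suc 0) = map (\<lambda>j. P j []) [0..<n]"
  unfolding conf_def by simp

lemma conf_zero[simp]: "conf n P c 0 = c"
  unfolding conf_def by simp

lemma pay_shift:
  "pay A n c P i (Suc k) = pay A n (map (\<lambda>j. P j []) [0..<n]) (residual P [map (\<lambda>j. P j []) [0..<n]]) i k"
  unfolding pay_def by (simp only: conf_shift)

lemma cost_at_tgt:
  assumes "c ! i = tgt A"
  shows "cost A n c P i = 0"
proof -
  have "(LEAST k. conf n P c k ! i = tgt A) = 0" using assms by (intro Least_eq_0) simp
  moreover have "\<exists>k. conf n P c k ! i = tgt A" using assms by (intro exI[of _ 0]) simp
  ultimately show ?thesis unfolding cost_def by (simp add: zero_enat_def)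
qed

lemma cost_shift:
  fixes P :: "'v profile" and n :: nat
  assumes "c ! i \<noteq> tgt A"
  defines "x \<equiv> map (\<lambda>j. P j []) [0..<n]"
  shows "cost A n c P i = enat (pay A n c P i 0) + cost A n x (residual P [x]) i"
proof (cases "\<exists>k. conf n P c k ! i = tgt A")
  case True
  then obtain k where k: "conf n P c k ! i = tgt A" by blast
  have ex2: "\<exists>k. conf n (residual P [x]) x k ! i = tgt A"
  proof (cases k)
    case 0 then show ?thesis using k assms by simp
  next
    case (Suc k') then show ?thesis using k conf_shift[of n P c k'] unfolding x_def by (intro exI[of _ k']) simp
  qed
  define L where "L = (LEAST k. conf n (residual P [x]) x k ! i = tgt A)"
  have L1: "conf n (residual P [x]) x L ! i = tgt A" unfolding L_def by (rule LeastI_ex[OF ex2])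
  have L2: "\<And>k. k < L \<Longrightarrow> conf n (residual P [x]) x k ! i \<noteq> tgt A"
    using L_def not_less_Least by blast
  have "(LEAST k. conf n P c k ! i = tgt A) = Suc L"
  proof (rule Least_equality)
    show "conf n P c (Suc L) ! i = tgt A" using L1 conf_shift[of n P c L] unfolding x_def by simp
  next
    fix y assume y: "conf n P c y ! i = tgt A"
    show "Suc L \<le> y"
    proof (cases y)
      case 0 then show ?thesis using y assms by simp
    next
      case (Suc y')
      have "conf n (residual P [x]) x y' ! i = tgt A"
        using y conf_shift[of n P c y'] unfolding x_def Suc by simp
      then have "\<not> y' < L" using L2 by blast
      then show ?thesis using Suc by simp
    qed
  qed
  then have "cost A n c P i = enat (\<Sum>k<Suc L. pay A n c P i k)"
    using True unfolding cost_def by simp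
  also have "(\<Sum>k<Suc L. pay A n c P i k) = pay A n c P i 0 + (\<Sum>k<L. pay A n c P i (Suc k))"
    by (rule sum.lessThan_Suc_shift)
  also have "(\<Sum>k<L. pay A n c P i (Suc k)) = (\<Sum>k<L. pay A n x (residual P [x]) i k)"
    unfolding x_def by (simp only: pay_shift)
  finally show ?thesis using ex2 unfolding cost_def L_def[symmetric] by simp
next
  case False
  have "\<not> (\<exists>k. conf n (residual P [x]) x k ! i = tgt A)"
  proof
    assume "\<exists>k. conf n (residual P [x]) x k ! i = tgt A"
    then obtain k where "conf n (residual P [x]) x k ! i = tgt A" by blast
    then have "conf n P c (Suc k) ! i = tgt A" using conf_shift[of n P c k] unfolding x_def by simp
    then show False using False by blast
  qed
  then show ?thesis using False unfolding cost_def by simp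
qed

lemma valid_Nil[simp]: "valid_history A n c []"
  by (simp add: valid_history_def)

lemma all_less_Suc_split: "(\<forall>k<Suc m. Q k) = (Q 0 \<and> (\<forall>k<m. Q (Suc k)))"
  by (auto simp: less_Suc_eq_0_disj)

lemma valid_Cons:
  "valid_history A n c (x # h) \<longleftrightarrow>
     length x = n \<and> (\<forall>j<n. edges A (c ! j) (x ! j) \<noteq> None) \<and> valid_history A n x h"
  unfolding valid_history_def
  by (simp only: length_Cons all_less_Suc_split nth_Cons_0 nth_Cons_Suc) blast

lemma valid_append:
  "valid_history A n c (h1 @ h2) \<longleftrightarrow> valid_history A n c h1 \<and> valid_history A n (last (c # h1)) h2"
proof (induction h1 arbitrary: c)
  case Nil then show ?case by simp
next
  case (Cons a h1)
  have e: "last (c # a # h1) = last (a # h1)" by simp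
  show ?case by (simp only: append_Cons valid_Cons Cons.IH e conj_assoc)
qed

lemma last_append_Cons: "last (c # h1 @ h2) = last (last (c # h1) # h2)"
  by (induction h1 arbitrary: c) auto

lemma residual_residual: "residual (residual P g) h = residual P (g @ h)"
  by (simp add: residual_def)

lemma residual_strategy:
  assumes "is_profile A n (init_config A n) \<sigma>" "j < n"
    "valid_history A n (init_config A n) g"
  shows "is_strategy A n (last (init_config A n # g)) j (residual \<sigma> g j)"
  unfolding is_strategy_def residual_def
proof (intro allI impI)
  fix h assume "valid_history A n (last (init_config A n # g)) h"
  then have "valid_history A n (init_config A n) (g @ h)" using assms(3) valid_append by blast
  then have "edges A (last (init_config A n # g @ h) ! j) (\<sigma> j (g @ h)) \<noteq> None"
    using assms(1,2) unfolding is_profile_def is_strategy_def by blast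
  then show "edges A (last (last (init_config A n # g) # h) ! j) (\<sigma> j (g @ h)) \<noteq> None"
    by (subst (asm) last_append_Cons) assumption
qed

lemma main_induct:
  assumes prof: "is_profile A n (init_config A n) \<sigma>"
    and vw: "is_VWSPE A n \<sigma>"
    and i: "i < n"
  shows "valid_history A n (init_config A n) g \<Longrightarrow>
    is_strategy A n (last (init_config A n # g)) i s \<Longrightarrow>
    (\<forall>h. m \<le> length h \<longrightarrow> s h = \<sigma> i (g @ h)) \<Longrightarrow>
    cost A n (last (init_config A n # g)) (residual \<sigma> g) i
      \<le> cost A n (last (init_config A n # g)) ((residual \<sigma> g)(i := s)) i"
proof (induction m arbitrary: g s)
  case 0
  have "s = residual \<sigma> g i"
  proof (rule ext)
    fix h show "s h = residual \<sigma> g i h" using "0.prems"(3) by (simp add: residual_def)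
  qed
  then show ?case by simp
next
  case (Suc m)
  define c where "c = last (init_config A n # g)"
  show ?case
  proof (cases "c ! i = tgt A")
    case True then show ?thesis unfolding c_def[symmetric] by (simp add: cost_at_tgt)
  next
    case False
    define P where "P = (residual \<sigma> g)(i := s)"
    define s' where "s' = (\<lambda>h. if h = [] then s [] else \<sigma> i (g @ h))"
    define P' where "P' = (residual \<sigma> g)(i := s')"
    define x where "x = map (\<lambda>j. P j []) [0..<n]"
    have x': "x = map (\<lambda>j. P' j []) [0..<n]"
      unfolding x_def P_def P'_def s'_def by simp
    define ssh where "ssh = (\<lambda>h. s (x # h))"
    have rP: "residual P [x] = (residual \<sigma> (g @ [x]))(i := ssh)"
      by (intro ext) (simp add: P_def residual_def ssh_def)
    have rP': "residual P' [x] = residual \<sigma> (g @ [x])"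
      by (intro ext) (simp add: P'_def residual_def s'_def)
    have validx: "valid_history A n c [x]"
    proof -
      have "\<forall>j<n. edges A (c ! j) (x ! j) \<noteq> None"
      proof (intro allI impI)
        fix j assume j: "j < n"
        show "edges A (c ! j) (x ! j) \<noteq> None"
        proof (cases "j = i")
          case True
          then have "x ! j = s []" using j unfolding x_def P_def by simp
          moreover have "edges A (last (c # []) ! i) (s []) \<noteq> None"
            using Suc.prems(2) valid_Nil unfolding is_strategy_def c_def by blast
          ultimately show ?thesis using True by simp
        next
          case False
          then have "x ! j = residual \<sigma> g j []" using j unfolding x_def P_def by simp
          moreover have "edges A (last (c # []) ! j) (residual \<sigma> g j []) \<noteq> None"
            using residual_strategy[OF prof j Suc.prems(1)] valid_Nil
            unfolding is_strategy_def c_def by blast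
          ultimately show ?thesis by simp
        qed
      qed
      then show ?thesis by (simp add: valid_Cons x_def)
    qed
    have vg': "valid_history A n (init_config A n) (g @ [x])"
      using Suc.prems(1) validx valid_append unfolding c_def by blast
    have lastg': "last (init_config A n # g @ [x]) = x" by simp
    have ssh_strat: "is_strategy A n x i ssh"
      unfolding is_strategy_def ssh_def
    proof (intro allI impI)
      fix h assume "valid_history A n x h"
      then have "valid_history A n c (x # h)" using validx by (simp add: valid_Cons)
      then have "edges A (last (c # x # h) ! i) (s (x # h)) \<noteq> None"
        using Suc.prems(2) unfolding is_strategy_def c_def by blast
      then show "edges A (last (x # h) ! i) (s (x # h)) \<noteq> None" by simp
    qed
    have ssh_ag: "\<forall>h. m \<le> length h \<longrightarrow> ssh h = \<sigma> i ((g @ [x]) @ h)"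
      using Suc.prems(3) unfolding ssh_def by auto
    have IH: "cost A n x (residual \<sigma> (g @ [x])) i \<le> cost A n x ((residual \<sigma> (g @ [x]))(i := ssh)) i"
      using Suc.IH[OF vg' _ ssh_ag] ssh_strat unfolding lastg' by blast
    have pay0: "pay A n c P i 0 = pay A n c P' i 0"
      by (rule pay_agree[where L=1]; simp add: P_def P'_def s'_def)
    have cP: "cost A n c P i = enat (pay A n c P i 0) + cost A n x ((residual \<sigma> (g @ [x]))(i := ssh)) i"
      using cost_shift[OF False, of n P] unfolding x_def[symmetric] rP .
    have cP': "cost A n c P' i = enat (pay A n c P i 0) + cost A n x (residual \<sigma> (g @ [x])) i"
      using cost_shift[OF False, of n P'] unfolding x'[symmetric] rP' pay0 .
    have le1: "cost A n c P' i \<le> cost A n c P i"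
      using cP cP' IH by (simp add: add_left_mono)
    have s'_strat: "is_strategy A n c i s'"
      unfolding is_strategy_def s'_def
    proof (intro allI impI)
      fix h assume h: "valid_history A n c h"
      show "edges A (last (c # h) ! i) (if h = [] then s [] else \<sigma> i (g @ h)) \<noteq> None"
      proof (cases "h = []")
        case True
        have "edges A (last (c # []) ! i) (s []) \<noteq> None"
          using Suc.prems(2) valid_Nil unfolding is_strategy_def c_def by blast
        then show ?thesis using True by simp
      next
        case False
        have "edges A (last (c # h) ! i) (residual \<sigma> g i h) \<noteq> None"
          using residual_strategy[OF prof i Suc.prems(1)] h unfolding is_strategy_def c_def by blast
        then show ?thesis using False by (simp add: residual_def)
      qed
    qed
    have fsd: "first_shot_deviating s' (residual \<sigma> g i)"
      unfolding first_shot_deviating_def s'_def residual_def by simp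
    have "is_VWNE A n c (residual \<sigma> g)" using vw Suc.prems(1) unfolding is_VWSPE_def c_def by blast
    then have le2: "cost A n c (residual \<sigma> g) i \<le> cost A n c P' i"
      using s'_strat fsd i unfolding is_VWNE_def P'_def by blast
    show ?thesis using le1 le2 unfolding c_def[symmetric] P_def[symmetric] by simp
  qed
qed

theorem theoremC3:
  fixes A :: "'v arena" and n :: nat and \<sigma> :: "'v profile"
  assumes "is_arena A"
    and "is_profile A n (init_config A n) \<sigma>"
  shows "is_SPE A n \<sigma> \<longleftrightarrow> is_VWSPE A n \<sigma>"
proof
  assume "is_SPE A n \<sigma>"
  then show "is_VWSPE A n \<sigma>"
    unfolding is_SPE_def is_VWSPE_def
  proof (intro allI impI)
    fix h assume "\<forall>h. valid_history A n (init_config A n) h \<longrightarrow>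
        is_NE A n (last (init_config A n # h)) (residual \<sigma> h)"
      and "valid_history A n (init_config A n) h"
    then have "is_NE A n (last (init_config A n # h)) (residual \<sigma> h)" by blast
    then show "is_VWNE A n (last (init_config A n # h)) (residual \<sigma> h)"
      unfolding is_NE_def is_VWNE_def by blast
  qed
next
  assume vw: "is_VWSPE A n \<sigma>"
  show "is_SPE A n \<sigma>"
    unfolding is_SPE_def is_NE_def
  proof (intro allI impI)
    fix g i s
    assume g: "valid_history A n (init_config A n) g" and i: "i < n"
      and s: "is_strategy A n (last (init_config A n # g)) i s"
    define c where "c = last (init_config A n # g)"
    define P where "P = (residual \<sigma> g)(i := s)"
    show "cost A n (last (init_config A n # g)) (residual \<sigma> g) i
          \<le> cost A n (last (init_config A n # g)) ((residual \<sigma> g)(i := s)) i"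
    proof (cases "\<exists>k. conf n P c k ! i = tgt A")
      case False
      then have "cost A n c P i = \<infinity>" unfolding cost_def by simp
      then show ?thesis unfolding c_def[symmetric] P_def[symmetric] by simp
    next
      case True
      define L where "L = (LEAST k. conf n P c k ! i = tgt A)"
      define sL where "sL = (\<lambda>h. if length h < L then s h else \<sigma> i (g @ h))"
      have ag: "\<And>j h. length h < L \<Longrightarrow> P j h = ((residual \<sigma> g)(i := sL)) j h"
        unfolding P_def sL_def by simp
      have eq: "cost A n c P i = cost A n c ((residual \<sigma> g)(i := sL)) i"
        using cost_agree[OF True L_def ag] .
      have sL_strat: "is_strategy A n c i sL"
        unfolding is_strategy_def sL_def
      proof (intro allI impI)
        fix h assume h: "valid_history A n c h"
        show "edges A (last (c # h) ! i) (if length h < L then s h else \<sigma> i (g @ h)) \<noteq> None"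
        proof (cases "length h < L")
          case True then show ?thesis using s h unfolding is_strategy_def c_def by simp
        next
          case False
          have "edges A (last (c # h) ! i) (residual \<sigma> g i h) \<noteq> None"
            using residual_strategy[OF assms(2) i g] h unfolding is_strategy_def c_def by blast
          then show ?thesis using False by (simp add: residual_def)
        qed
      qed
      have "cost A n c (residual \<sigma> g) i \<le> cost A n c ((residual \<sigma> g)(i := sL)) i"
      proof -
        have ag2: "\<forall>h. L \<le> length h \<longrightarrow> sL h = \<sigma> i (g @ h)" unfolding sL_def by simp
        show ?thesis using main_induct[OF assms(2) vw i g _ ag2] sL_strat unfolding c_def by blast
      qed
      then show ?thesis using eq unfolding c_def[symmetric] P_def[symmetric] by simp
    qed
  qed
qed

end
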